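(* Let $\psi\in C^1(\mathbb{R})$ satisfy: $\psi(0)=1$, $\psi$ is even, there exist $C>0$ and $\delta>1$ with $|\psi(x)|+|x\psi'(x)|\leq C\langle x\rangle^{-\delta}$ for all $x\in\mathbb{R}$, and $A_\psi:=\int_{\mathbb{R}}\psi(x)\,\mathrm{d}x\neq 0$. Let $\mu$ be a probability measure on $\mathbb{R}$ and $0\le\alpha\le 1$. Then $C^\alpha_{\mu,\psi}(x)$ is finite for any $x$ for which $D^\alpha_\mu(x)$ is finite; and, if $\psi$ is non-negative, then for each $x$, $C^\alpha_{\mu,\psi}(x)$ and $D^\alpha_\mu(x)$ are both finite or both infinite.
   Context: $\langle x\rangle=(1+x^2)^{1/2}$. For $a>0$, $\psi_a(x)=\psi(x/a)$ and $(\psi_a*\mu)(x)=\int\psi_a(x-y)\,\mathrm{d}\mu(y)$. Define $C^\alpha_{\mu,\psi}(x)=\limsup_{a\to0}\frac{(\psi_a*\mu)(x)}{a^\alpha}$ and $D^\alpha_\mu(x)=\limsup_{\varepsilon\to0}\frac{\mu((x-\varepsilon,x+\varepsilon))}{(2\varepsilon)^\alpha}$ (limits over positive $a,\varepsilon$). *)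

theory Defs
  imports "HOL-Probability.Probability"
begin

definition jbr :: "real \<Rightarrow> real" where
  "jbr x = (1 + x\<^sup>2) powr (1/2)"

definition conv_dil :: "(real \<Rightarrow> real) \<Rightarrow> real \<Rightarrow> real measure \<Rightarrow> real \<Rightarrow> real" where
  "conv_dil \<psi> a \<mu> x = (\<integral>y. \<psi> ((x - y) / a) \<partial>\<mu>)"

definition C_alpha :: "real \<Rightarrow> real measure \<Rightarrow> (real \<Rightarrow> real) \<Rightarrow> real \<Rightarrow> ereal" where
  "C_alpha \<alpha> \<mu> \<psi> x = Limsup (at_right 0) (\<lambda>a. ereal (conv_dil \<psi> a \<mu> x / a powr \<alpha>))"

definition D_alpha :: "real \<Rightarrow> real measure \<Rightarrow> real \<Rightarrow> ereal" where
  "D_alpha \<alpha> \<mu> x = Limsup (at_right 0)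
     (\<lambda>\<epsilon>. ereal (measure \<mu> {x - \<epsilon> <..< x + \<epsilon>} / (2 * \<epsilon>) powr \<alpha>))"

end

theory Submission
  imports Defs
begin

lemma jbr_ge: "jbr t \<ge> 1" "jbr t \<ge> \<bar>t\<bar>"
proof -
  have e: "jbr t = sqrt (1 + t\<^sup>2)" unfolding jbr_def by (simp add: powr_half_sqrt add_nonneg_nonneg)
  show "jbr t \<ge> 1" unfolding e by simp
  show "jbr t \<ge> \<bar>t\<bar>" unfolding e by (metis le_add_same_cancel2 real_sqrt_abs real_sqrt_le_mono zero_le_one)
qed

lemma pw_bound:
  fixes t \<delta> :: real assumes "\<delta> > 0"
  shows "\<exists>k::nat. jbr t powr (-\<delta>) \<le> 2 powr \<delta> * (2 powr (-\<delta>))^k \<and> \<bar>t\<bar> < 2^k"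
proof (cases "\<bar>t\<bar> < 1")
  case True
  have "jbr t powr (-\<delta>) \<le> 1" using jbr_ge(1)[of t] assms
    by (simp add: powr_minus divide_simps) (smt (verit) ge_one_powr_ge_zero)
  also have "1 \<le> 2 powr \<delta>" using assms by (intro ge_one_powr_ge_zero) auto
  finally show ?thesis using True by (intro exI[of _ 0]) simp
next
  case False
  have ex: "\<exists>k::nat. \<bar>t\<bar> < 2^k" using real_arch_pow[of 2 "\<bar>t\<bar>"] by simp
  define k where "k = (LEAST k::nat. \<bar>t\<bar> < 2^k)"
  have k1: "\<bar>t\<bar> < 2^k" unfolding k_def using LeastI_ex[OF ex] .
  have k0: "k \<noteq> 0" using k1 False by (cases k) auto
  have k2: "\<bar>t\<bar> \<ge> 2^(k-1)" using not_less_Least[of "k-1" "\<lambda>k. \<bar>t\<bar> < 2^k"] k0 unfolding k_def[symmetric] by linarith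
  have "jbr t powr (-\<delta>) \<le> \<bar>t\<bar> powr (-\<delta>)"
    using jbr_ge(2)[of t] False assms by (intro powr_mono2') auto
  also have "\<dots> \<le> (2^(k-1)) powr (-\<delta>)"
    using k2 assms by (intro powr_mono2') auto
  also have "\<dots> = 2 powr (real (k-1) * (-\<delta>))"
    by (simp add: powr_realpow[symmetric] powr_powr)
  also have "\<dots> = 2 powr \<delta> * (2 powr (-\<delta>))^k"
    using k0 by (simp add: powr_power powr_add[symmetric] of_nat_diff algebra_simps)
  finally show ?thesis using k1 by blast
qed

lemma pw_e1: "(a::real) > 0 \<Longrightarrow> (2^k*a) powr \<alpha> = (2 powr \<alpha>)^k * a powr \<alpha>"
  by (simp add: powr_mult powr_power powr_realpow[symmetric] powr_powr mult.commute)
lemma pw_e2: "(2 powr (-\<delta>))^k * (2 powr \<alpha>)^k = (2 powr (\<alpha> - \<delta>) :: real)^k"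
  by (simp add: power_mult_distrib[symmetric] powr_add[symmetric])

lemma conv_bound:
  fixes \<psi> :: "real \<Rightarrow> real"
  assumes prob: "prob_space \<mu>" and sets: "sets \<mu> = sets borel"
    and dl: "\<delta> > \<alpha>" "0 \<le> \<alpha>" and Cp: "Cp \<ge> 0"
    and psi: "\<forall>t. \<bar>\<psi> t\<bar> \<le> Cp * jbr t powr (-\<delta>)"
    and meas: "\<psi> \<in> borel_measurable borel"
    and ball: "\<forall>r>0. measure \<mu> {x - r<..<x + r} \<le> K * r powr \<alpha>" and K: "K \<ge> 0"
    and a: "a > 0"
  shows "\<bar>conv_dil \<psi> a \<mu> x\<bar> \<le> Cp * 2 powr \<delta> * K * a powr \<alpha> / (1 - 2 powr (\<alpha> - \<delta>))"
proof -
  interpret prob_space \<mu> by (rule prob)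
  define c where "c k = Cp * 2 powr \<delta> * (2 powr (-\<delta>))^k" for k :: nat
  define A where "A k = {x - 2^k*a <..< x + 2^k*a}" for k :: nat
  define B where "B = Cp * 2 powr \<delta> * K * a powr \<alpha>"
  define r where "r = (2::real) powr (\<alpha> - \<delta>)"
  have r: "0 \<le> r" "r < 1" unfolding r_def using dl by (auto intro: powr_less_one)
  have c0: "c k \<ge> 0" for k unfolding c_def using Cp by simp
  have Asets: "A k \<in> sets \<mu>" for k unfolding A_def sets by simp
  have dpos: "\<delta> > 0" using dl by linarith
  have sg: "sum f {k} = f k" for f :: "nat \<Rightarrow> ennreal" and k by simp
  have pt: "ennreal \<bar>\<psi> ((x-y)/a)\<bar> \<le> (\<Sum>k. ennreal (c k) * indicator (A k) y)" for y
  proof -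
    obtain k where k: "jbr ((x-y)/a) powr (-\<delta>) \<le> 2 powr \<delta> * (2 powr (-\<delta>))^k" "\<bar>(x-y)/a\<bar> < 2^k"
      using pw_bound[OF dpos] by blast
    have "\<bar>\<psi> ((x-y)/a)\<bar> \<le> c k" unfolding c_def using psi k(1) Cp
      by (smt (verit, ccfv_SIG) mult.assoc mult_left_mono)
    moreover have "y \<in> A k" unfolding A_def using k(2) a by (auto simp: abs_less_iff field_simps)
    ultimately have "ennreal \<bar>\<psi> ((x-y)/a)\<bar> \<le> ennreal (c k) * indicator (A k) y"
      by (simp add: ennreal_leI)
    also have "\<dots> \<le> (\<Sum>k. ennreal (c k) * indicator (A k) y)"
      using sum_le_suminf[OF summableI, of "{k}" "\<lambda>k. ennreal (c k) * indicator (A k) y"]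
        sg[of "\<lambda>k. ennreal (c k) * indicator (A k) y"] by (simp only:) simp
    finally show ?thesis .
  qed
  have "(\<integral>\<^sup>+ y. ennreal \<bar>\<psi> ((x-y)/a)\<bar> \<partial>\<mu>) \<le> (\<integral>\<^sup>+ y. (\<Sum>k. ennreal (c k) * indicator (A k) y) \<partial>\<mu>)"
    by (intro nn_integral_mono pt)
  also have "\<dots> = (\<Sum>k. \<integral>\<^sup>+ y. ennreal (c k) * indicator (A k) y \<partial>\<mu>)"
    by (rule nn_integral_suminf) (use Asets in auto)
  also have "\<dots> = (\<Sum>k. ennreal (c k) * emeasure \<mu> (A k))"
    using Asets by (simp add: nn_integral_cmult_indicator)
  also have "\<dots> \<le> (\<Sum>k. ennreal (B * r^k))"
  proof (intro suminf_le summableI)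
    fix k
    have "measure \<mu> (A k) \<le> K * (2^k*a) powr \<alpha>" using ball a unfolding A_def by simp
    hence "c k * measure \<mu> (A k) \<le> c k * (K * (2^k*a) powr \<alpha>)" using c0 by (intro mult_left_mono) auto
    also have "\<dots> = B * r^k"
    proof -
      note e1 = pw_e1[OF a, of k \<alpha>]
      note e2 = pw_e2[of \<delta> k \<alpha>]
      show ?thesis unfolding e1 c_def B_def r_def e2[symmetric] by (simp only: mult_ac)
    qed
    finally have cm: "c k * measure \<mu> (A k) \<le> B * r^k" .
    show "ennreal (c k) * emeasure \<mu> (A k) \<le> ennreal (B * r^k)"
    proof -
      have "ennreal (c k) * emeasure \<mu> (A k) = ennreal (c k * measure \<mu> (A k))"
        using c0[of k] by (simp add: emeasure_eq_measure ennreal_mult)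
      then show ?thesis using cm by (simp add: ennreal_leI)
    qed
  qed
  also have "\<dots> = ennreal (B / (1 - r))"
  proof (rule suminf_ennreal_eq)
    show "0 \<le> B * r^k" for k unfolding B_def using Cp K r by simp
    show "(\<lambda>k. B * r^k) sums (B / (1 - r))" using geometric_sums[of r] r
      using sums_mult[OF geometric_sums[of r], of B] r by simp
  qed
  finally have nn: "(\<integral>\<^sup>+ y. ennreal \<bar>\<psi> ((x-y)/a)\<bar> \<partial>\<mu>) \<le> ennreal (B / (1 - r))" .
  have "\<bar>conv_dil \<psi> a \<mu> x\<bar> \<le> (\<integral>y. \<bar>\<psi> ((x-y)/a)\<bar> \<partial>\<mu>)"
    unfolding conv_dil_def by (rule integral_abs_bound)
  also have "\<dots> \<le> B / (1 - r)"
    by (rule integral_real_bounded[OF _ nn]) (unfold B_def, use Cp K r in simp)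
  finally show ?thesis unfolding B_def r_def .
qed

lemma jbr_powr_le1: "\<delta> \<ge> 0 \<Longrightarrow> jbr t powr (-\<delta>) \<le> 1"
  using jbr_ge(1)[of t]
  by (simp add: powr_minus divide_simps) (smt (verit) ge_one_powr_ge_zero)

lemma meas_comp:
  fixes x a :: real
  assumes "continuous_on UNIV \<psi>" "sets \<mu> = sets borel"
  shows "(\<lambda>y. \<psi> ((x - y) / a) :: real) \<in> borel_measurable \<mu>"
proof -
  have "continuous_on UNIV (\<lambda>y. (x - y) * inverse a :: real)" by (intro continuous_intros)
  hence "continuous_on UNIV (\<lambda>y. (x - y) / a)" by (simp add: divide_inverse)
  hence "continuous_on UNIV (\<lambda>y. \<psi> ((x - y) / a))"
    by (rule continuous_on_compose2[OF assms(1)]) auto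
  hence "(\<lambda>y. \<psi> ((x - y) / a)) \<in> borel_measurable borel" by (rule borel_measurable_continuous_onI)
  thus ?thesis using measurable_cong_sets[OF assms(2) refl, of borel] by metis
qed

theorem theorem2p9:
  fixes \<psi> :: "real \<Rightarrow> real" and \<mu> :: "real measure" and \<alpha> :: real
  assumes C1: "\<psi> C1_differentiable_on UNIV"
    and psi0: "\<psi> 0 = 1"
    and even: "\<And>x. \<psi> (- x) = \<psi> x"
    and decay: "\<exists>C>0. \<exists>\<delta>>1. \<forall>x. \<bar>\<psi> x\<bar> + \<bar>x * deriv \<psi> x\<bar> \<le> C * jbr x powr (- \<delta>)"
    and A_nz: "(\<integral>x. \<psi> x \<partial>lborel) \<noteq> 0"
    and prob: "prob_space \<mu>"
    and sets_mu: "sets \<mu> = sets borel"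
    and alpha: "0 \<le> \<alpha>" "\<alpha> \<le> 1"
  shows "(\<forall>x. \<bar>D_alpha \<alpha> \<mu> x\<bar> \<noteq> \<infinity> \<longrightarrow> \<bar>C_alpha \<alpha> \<mu> \<psi> x\<bar> \<noteq> \<infinity>)
       \<and> ((\<forall>x. 0 \<le> \<psi> x) \<longrightarrow>
            (\<forall>x. \<bar>C_alpha \<alpha> \<mu> \<psi> x\<bar> \<noteq> \<infinity> \<longleftrightarrow> \<bar>D_alpha \<alpha> \<mu> x\<bar> \<noteq> \<infinity>))"
proof -
  interpret P: prob_space \<mu> by (rule prob)
  obtain Cp \<delta> where Cp: "Cp > 0" and dl: "\<delta> > 1"
    and dec: "\<forall>x. \<bar>\<psi> x\<bar> + \<bar>x * deriv \<psi> x\<bar> \<le> Cp * jbr x powr (- \<delta>)" using decay by blast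
  have psi_bd: "\<forall>t. \<bar>\<psi> t\<bar> \<le> Cp * jbr t powr (-\<delta>)" using dec by (smt (verit))
  have psi_le: "\<bar>\<psi> t\<bar> \<le> Cp" for t
  proof -
    have "Cp * jbr t powr (-\<delta>) \<le> Cp * 1" using Cp dl by (intro mult_left_mono jbr_powr_le1) auto
    thus ?thesis using psi_bd by (smt (verit))
  qed
  have cont: "continuous_on UNIV \<psi>" using C1 by (rule C1_differentiable_imp_continuous_on)
  have meas: "\<psi> \<in> borel_measurable borel" using cont by (rule borel_measurable_continuous_onI)
  have intg: "integrable \<mu> (\<lambda>y. \<psi> ((x - y) / a))" for x a
    by (rule P.integrable_const_bound[where B=Cp]) (use psi_le meas_comp[OF cont sets_mu] in auto)
  have Fnb: "at_right (0::real) \<noteq> bot" by simp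
  have evpos: "eventually (\<lambda>a::real. 0 < a) (at_right 0)" by (rule eventually_at_right_less)
  have part1: "\<bar>C_alpha \<alpha> \<mu> \<psi> x\<bar> \<noteq> \<infinity>" if D: "\<bar>D_alpha \<alpha> \<mu> x\<bar> \<noteq> \<infinity>" for x
  proof -
    obtain M where M: "D_alpha \<alpha> \<mu> x < ereal M" using D by (cases "D_alpha \<alpha> \<mu> x") (auto intro: less_add_one)
    have "eventually (\<lambda>\<epsilon>. ereal (measure \<mu> {x - \<epsilon> <..< x + \<epsilon>} / (2 * \<epsilon>) powr \<alpha>) < ereal M) (at_right 0)"
      using Limsup_lessD[OF M[unfolded D_alpha_def]] .
    then obtain b where b: "b > 0" and bM: "\<And>\<epsilon>. 0 < \<epsilon> \<Longrightarrow> \<epsilon> < b \<Longrightarrow>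
        measure \<mu> {x - \<epsilon> <..< x + \<epsilon>} / (2 * \<epsilon>) powr \<alpha> < M"
      unfolding eventually_at_right_field by auto
    define K where "K = \<bar>M\<bar> * 2 powr \<alpha> + b powr (-\<alpha>)"
    have K0: "K \<ge> 0" unfolding K_def by simp
    have ball: "\<forall>r>0. measure \<mu> {x - r<..<x + r} \<le> K * r powr \<alpha>"
    proof (intro allI impI)
      fix r :: real assume r: "r > 0"
      show "measure \<mu> {x - r<..<x + r} \<le> K * r powr \<alpha>"
      proof (cases "r < b")
        case True
        have "measure \<mu> {x - r<..<x + r} \<le> M * (2 * r) powr \<alpha>"
          using bM[OF r True] r by (simp add: divide_simps)
        also have "\<dots> \<le> \<bar>M\<bar> * 2 powr \<alpha> * r powr \<alpha>" using r by (simp add: powr_mult mult_right_mono)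
        also have "\<dots> \<le> K * r powr \<alpha>" unfolding K_def by (intro mult_right_mono) auto
        finally show ?thesis .
      next
        case False
        have "measure \<mu> {x - r<..<x + r} \<le> 1" by simp
        also have "1 \<le> (r / b) powr \<alpha>" using False b alpha by (intro ge_one_powr_ge_zero) auto
        also have "\<dots> = b powr (-\<alpha>) * r powr \<alpha>" using b r by (simp add: powr_divide powr_minus divide_simps)
        also have "\<dots> \<le> K * r powr \<alpha>" unfolding K_def by (intro mult_right_mono) auto
        finally show ?thesis .
      qed
    qed
    define Q where "Q = Cp * 2 powr \<delta> * K / (1 - 2 powr (\<alpha> - \<delta>))"
    have cb: "\<bar>conv_dil \<psi> a \<mu> x\<bar> \<le> Q * a powr \<alpha>" if a: "a > 0" for a
      using conv_bound[OF prob sets_mu _ alpha(1) _ psi_bd meas ball K0 a] dl alpha Cp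
      unfolding Q_def by (simp add: field_simps)
    have rb: "\<bar>conv_dil \<psi> a \<mu> x / a powr \<alpha>\<bar> \<le> Q" if a: "a > 0" for a
      using cb[OF a] a by (simp add: divide_simps abs_divide)
    have rb1: "ereal (conv_dil \<psi> a \<mu> x / a powr \<alpha>) \<le> ereal Q" if "a > 0" for a
      using rb[OF that] unfolding ereal_less_eq abs_le_iff by linarith
    have rb2: "ereal (-Q) \<le> ereal (conv_dil \<psi> a \<mu> x / a powr \<alpha>)" if "a > 0" for a
      using rb[OF that] unfolding ereal_less_eq abs_le_iff by linarith
    have "C_alpha \<alpha> \<mu> \<psi> x \<le> ereal Q" unfolding C_alpha_def
      by (rule Limsup_bounded, rule eventually_mono[OF evpos]) (rule rb1)
    moreover have "ereal (-Q) \<le> C_alpha \<alpha> \<mu> \<psi> x" unfolding C_alpha_def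
      by (rule le_Limsup[OF Fnb], rule eventually_mono[OF evpos]) (rule rb2)
    ultimately show ?thesis by auto
  qed
  have part2: "\<bar>D_alpha \<alpha> \<mu> x\<bar> \<noteq> \<infinity>" if pos: "\<forall>x. 0 \<le> \<psi> x" and C: "\<bar>C_alpha \<alpha> \<mu> \<psi> x\<bar> \<noteq> \<infinity>" for x
  proof -
    obtain M where M: "C_alpha \<alpha> \<mu> \<psi> x < ereal M" using C by (cases "C_alpha \<alpha> \<mu> \<psi> x") (auto intro: less_add_one)
    have "eventually (\<lambda>a. ereal (conv_dil \<psi> a \<mu> x / a powr \<alpha>) < ereal M) (at_right 0)"
      using Limsup_lessD[OF M[unfolded C_alpha_def]] .
    then obtain b where b: "b > 0" and bM: "\<And>a. 0 < a \<Longrightarrow> a < b \<Longrightarrow> conv_dil \<psi> a \<mu> x / a powr \<alpha> < M"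
      unfolding eventually_at_right_field by auto
    have "isCont \<psi> 0" using cont by (simp add: continuous_on_eq_continuous_at)
    then obtain \<eta> where eta: "\<eta> > 0" and etab: "\<And>t. dist t 0 < \<eta> \<Longrightarrow> dist (\<psi> t) (\<psi> 0) < 1/2"
      unfolding continuous_at_eps_delta by (meson half_gt_zero zero_less_one)
    have half: "\<psi> t \<ge> 1/2" if "\<bar>t\<bar> < \<eta>" for t
    proof -
      have "\<bar>\<psi> t - \<psi> 0\<bar> < 1/2" using etab[of t] that by (simp add: dist_real_def)
      thus ?thesis using psi0 unfolding abs_less_iff by linarith
    qed
    define R where "R = 2 * \<bar>M\<bar> * \<eta> powr (-\<alpha>)"
    have rat: "measure \<mu> {x - \<epsilon> <..< x + \<epsilon>} / (2 * \<epsilon>) powr \<alpha> \<le> R" if e: "0 < \<epsilon>" "\<epsilon> < b * \<eta>" for \<epsilon>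
    proof -
      define a where "a = \<epsilon> / \<eta>"
      have a: "0 < a" "a < b" using e eta unfolding a_def by (auto simp: field_simps)
      define S where "S = {x - \<epsilon> <..< x + \<epsilon>}"
      have S: "S \<in> sets \<mu>" unfolding S_def sets_mu by simp
      have "(\<integral>y. indicator S y / 2 \<partial>\<mu>) \<le> (\<integral>y. \<psi> ((x - y) / a) \<partial>\<mu>)"
      proof (rule integral_mono[OF _ intg])
        show "integrable \<mu> (\<lambda>y. indicator S y / 2 :: real)"
          by (rule P.integrable_const_bound[where B=1]) (use S in \<open>auto simp: indicator_def\<close>)
        fix y
        show "indicator S y / 2 \<le> \<psi> ((x - y) / a)"
        proof (cases "y \<in> S")
          case True
          hence "\<bar>x - y\<bar> < \<eta> * a" using eta unfolding S_def a_def
            by (auto simp: abs_less_iff)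
          hence "\<bar>(x - y) / a\<bar> < \<eta>" using a(1)
            by (simp add: abs_divide divide_less_eq mult.commute)
          thus ?thesis using half True by simp
        next
          case False thus ?thesis using pos by simp
        qed
      qed
      hence m1: "measure \<mu> S / 2 \<le> conv_dil \<psi> a \<mu> x" unfolding conv_dil_def using S by simp
      have m2: "conv_dil \<psi> a \<mu> x < M * a powr \<alpha>" using bM[OF a] a by (simp add: divide_simps)
      have "a powr \<alpha> = \<epsilon> powr \<alpha> * \<eta> powr (-\<alpha>)" unfolding a_def using e eta
        by (simp add: powr_divide powr_minus divide_simps)
      note apow = this
      have "measure \<mu> S \<le> 2 * M * a powr \<alpha>" using m1 m2 by linarith
      also have "\<dots> \<le> 2 * \<bar>M\<bar> * a powr \<alpha>" by (intro mult_right_mono) auto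
      also have "\<dots> = R * \<epsilon> powr \<alpha>" unfolding R_def apow by (simp only: mult_ac)
      finally have m3: "measure \<mu> S \<le> R * \<epsilon> powr \<alpha>" .
      have "\<epsilon> powr \<alpha> \<le> (2 * \<epsilon>) powr \<alpha>" using e alpha by (intro powr_mono2) auto
      moreover have "\<epsilon> powr \<alpha> > 0" using e by simp
      ultimately have "measure \<mu> S / (2 * \<epsilon>) powr \<alpha> \<le> measure \<mu> S / \<epsilon> powr \<alpha>"
        by (intro divide_left_mono) auto
      also have "\<dots> \<le> R" using m3 \<open>\<epsilon> powr \<alpha> > 0\<close> by (simp add: divide_simps)
      finally show ?thesis unfolding S_def .
    qed
    have "D_alpha \<alpha> \<mu> x \<le> ereal R" unfolding D_alpha_def
    proof (rule Limsup_bounded)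
      have "eventually (\<lambda>\<epsilon>. \<epsilon> \<in> {0<..<b*\<eta>}) (at_right (0::real))"
        using b eta by (intro eventually_at_right_real) simp
      thus "\<forall>\<^sub>F \<epsilon> in at_right 0. ereal (measure \<mu> {x - \<epsilon> <..< x + \<epsilon>} / (2 * \<epsilon>) powr \<alpha>) \<le> ereal R"
        by (rule eventually_mono) (use rat in auto)
    qed
    moreover have "ereal 0 \<le> D_alpha \<alpha> \<mu> x" unfolding D_alpha_def
      by (rule le_Limsup[OF Fnb], rule eventually_mono[OF evpos]) auto
    ultimately show ?thesis by auto
  qed
  show ?thesis
  proof (intro conjI allI impI iffI)
    fix x assume "\<bar>D_alpha \<alpha> \<mu> x\<bar> \<noteq> \<infinity>" thus "\<bar>C_alpha \<alpha> \<mu> \<psi> x\<bar> \<noteq> \<infinity>" by (rule part1)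
  next
    fix x assume "\<forall>x. 0 \<le> \<psi> x" "\<bar>C_alpha \<alpha> \<mu> \<psi> x\<bar> \<noteq> \<infinity>"
    thus "\<bar>D_alpha \<alpha> \<mu> x\<bar> \<noteq> \<infinity>" by (rule part2)
  next
    fix x assume "\<bar>D_alpha \<alpha> \<mu> x\<bar> \<noteq> \<infinity>" thus "\<bar>C_alpha \<alpha> \<mu> \<psi> x\<bar> \<noteq> \<infinity>" by (rule part1)
  qed
qed
end
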